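(* Let $\mathbb I$ be an index coding problem and let $V_1,\dots,V_n\in\mathbb F^3$ be a valid scalar linear index code of length $3$ for $\mathbb I$ over a finite field $\mathbb F$. Then for every type-2 alignment set of $\mathbb I$, with message set ${\cal W}'$ (the union of its triangular interfering sets), the vectors assigned to the messages of ${\cal W}'$ span a vector space of dimension exactly $2$.
   Context: Index coding setup: An index coding problem $\mathbb I$ over a finite field $\mathbb F$ consists of a set of messages ${\cal W}=\{W_1,\dots,W_n\}$ (each message is a symbol of $\mathbb F$ in the scalar setting), a set of receivers $[1:T]$, and for each receiver $j$ a demand set $D(j)\subseteq{\cal W}$ and a side-information set $S(j)\subseteq {\cal W}\setminus D(j)$. Every message is demanded by at least one receiver. For a receiver $j$ and $W_k\in D(j)$, the interfering set is $Interf_k(j)={\cal W}\setminus(\{W_k\}\cup S(j))$; if $W_k\notin D(j)$ then $Interf_k(j)=\emptyset$. A scalar linear index code of length $L$ over $\mathbb F$ is an assignment of vectors $V_1,\dots,V_n\in\mathbb F^L$ to the messages; the source broadcasts $\sum_{i=1}^n V_iW_i\in\mathbb F^L$, and the code is valid if every receiver $j$ can recover every message of $D(j)$ from the broadcast codeword and the messages in $S(j)$. Two distinct messages $W_i,W_k$ are in conflict if there is a receiver $j$ with $W_k\in D(j)$ and $W_i\in Interf_k(j)$, or a receiver $j$ with $W_i\in D(j)$ and $W_k\in Interf_i(j)$. A triangular interfering set is a subset ${\cal W}''\subseteq{\cal W}$ with $|{\cal W}''|=3$ such that there exist a receiver $j$ and a message $W_k\in D(j)\setminus{\cal W}''$ with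 ${\cal W}''\subseteq Interf_k(j)$, and at least two messages of ${\cal W}''$ are in conflict. Two distinct triangular interfering sets ${\cal W}_1,{\cal W}_2$ are adjacent if ${\cal W}_1\cap{\cal W}_2=\{W_a,W_b\}$ with $W_a,W_b$ in conflict. Two triangular interfering sets are connected if there is a finite sequence of triangular interfering sets starting at one and ending at the other in which consecutive sets are adjacent (every set is connected to itself). A type-2 alignment set is a maximal collection of pairwise connected triangular interfering sets (an equivalence class under connectedness); its message set is the union of its triangular interfering sets. *)

theory Defs
  imports "HOL-Analysis.Analysis"
begin

text \<open>Index coding problem: messages W_1..W_n are the indices 1..n,
receivers are 1..T, D j is the demand set and S j the side-information set of receiver j.\<close>

definition ic_problem :: "nat \<Rightarrow> nat \<Rightarrow> (nat \<Rightarrow> nat set) \<Rightarrow> (nat \<Rightarrow> nat set) \<Rightarrow> bool" where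
  "ic_problem n T D S \<longleftrightarrow>
     (\<forall>j\<in>{1..T}. D j \<subseteq> {1..n} \<and> S j \<subseteq> {1..n} - D j) \<and>
     (\<forall>k\<in>{1..n}. \<exists>j\<in>{1..T}. k \<in> D j)"

definition interf :: "nat \<Rightarrow> (nat \<Rightarrow> nat set) \<Rightarrow> (nat \<Rightarrow> nat set) \<Rightarrow> nat \<Rightarrow> nat \<Rightarrow> nat set" where
  "interf n D S k j = (if k \<in> D j then {1..n} - ({k} \<union> S j) else {})"

definition codeword :: "nat \<Rightarrow> (nat \<Rightarrow> 'f::field ^ 'L) \<Rightarrow> (nat \<Rightarrow> 'f) \<Rightarrow> 'f ^ 'L" where
  "codeword n V w = (\<Sum>i\<in>{1..n}. w i *s V i)"

definition valid_code :: "nat \<Rightarrow> nat \<Rightarrow> (nat \<Rightarrow> nat set) \<Rightarrow> (nat \<Rightarrow> nat set) \<Rightarrow>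
    (nat \<Rightarrow> 'f::field ^ 'L) \<Rightarrow> bool" where
  "valid_code n T D S V \<longleftrightarrow>
     (\<forall>j\<in>{1..T}. \<forall>k\<in>D j. \<exists>g :: 'f ^ 'L \<Rightarrow> (nat \<Rightarrow> 'f) \<Rightarrow> 'f.
        \<forall>w :: nat \<Rightarrow> 'f. g (codeword n V w) (restrict w (S j)) = w k)"

definition in_conflict :: "nat \<Rightarrow> nat \<Rightarrow> (nat \<Rightarrow> nat set) \<Rightarrow> (nat \<Rightarrow> nat set) \<Rightarrow> nat \<Rightarrow> nat \<Rightarrow> bool" where
  "in_conflict n T D S i k \<longleftrightarrow> i \<noteq> k \<and> i \<in> {1..n} \<and> k \<in> {1..n} \<and>
     (\<exists>j\<in>{1..T}. (k \<in> D j \<and> i \<in> interf n D S k j) \<or> (i \<in> D j \<and> k \<in> interf n D S i j))"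

definition triangular :: "nat \<Rightarrow> nat \<Rightarrow> (nat \<Rightarrow> nat set) \<Rightarrow> (nat \<Rightarrow> nat set) \<Rightarrow> nat set \<Rightarrow> bool" where
  "triangular n T D S A \<longleftrightarrow> A \<subseteq> {1..n} \<and> card A = 3 \<and>
     (\<exists>j\<in>{1..T}. \<exists>k\<in>D j - A. A \<subseteq> interf n D S k j) \<and>
     (\<exists>a\<in>A. \<exists>b\<in>A. in_conflict n T D S a b)"

definition tri_adjacent :: "nat \<Rightarrow> nat \<Rightarrow> (nat \<Rightarrow> nat set) \<Rightarrow> (nat \<Rightarrow> nat set) \<Rightarrow> nat set \<Rightarrow> nat set \<Rightarrow> bool" where
  "tri_adjacent n T D S A B \<longleftrightarrow> triangular n T D S A \<and> triangular n T D S B \<and> A \<noteq> B \<and>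
     (\<exists>a b. A \<inter> B = {a, b} \<and> in_conflict n T D S a b)"

definition tri_connected :: "nat \<Rightarrow> nat \<Rightarrow> (nat \<Rightarrow> nat set) \<Rightarrow> (nat \<Rightarrow> nat set) \<Rightarrow> nat set \<Rightarrow> nat set \<Rightarrow> bool" where
  "tri_connected n T D S A B \<longleftrightarrow> triangular n T D S A \<and> triangular n T D S B \<and>
     (tri_adjacent n T D S)\<^sup>*\<^sup>* A B"

definition type2_alignment_set :: "nat \<Rightarrow> nat \<Rightarrow> (nat \<Rightarrow> nat set) \<Rightarrow> (nat \<Rightarrow> nat set) \<Rightarrow> nat set set \<Rightarrow> bool" where
  "type2_alignment_set n T D S C \<longleftrightarrow>
     (\<exists>A. triangular n T D S A \<and> C = {B. tri_connected n T D S A B})"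

end

theory Submission
  imports Defs
begin

lemma span_idx:
  fixes V :: "nat \<Rightarrow> 'f::field ^ 'L"
  assumes "finite I"
  shows "vec.span (V ` I) \<subseteq> {x. \<exists>c. x = (\<Sum>i\<in>I. c i *s V i)}"
proof (rule vec.span_minimal)
  show "V ` I \<subseteq> {x. \<exists>c. x = (\<Sum>i\<in>I. c i *s V i)}"
  proof
    fix x assume "x \<in> V ` I"
    then obtain i0 where i0: "i0 \<in> I" "x = V i0" by auto
    have "(\<Sum>i\<in>I. (if i = i0 then 1 else 0) *s V i) = (\<Sum>i\<in>I. (if i = i0 then V i else 0))"
      by (rule sum.cong) auto
    also have "\<dots> = V i0" using i0 assms by (simp add: sum.delta)
    finally have "x = (\<Sum>i\<in>I. (\<lambda>i. if i = i0 then 1 else 0) i *s V i)" using i0 by simp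
    then show "x \<in> {x. \<exists>c. x = (\<Sum>i\<in>I. c i *s V i)}" by (intro CollectI exI[of _ "\<lambda>i. if i = i0 then 1 else 0"])
  qed
  show "vec.subspace {x. \<exists>c. x = (\<Sum>i\<in>I. c i *s V i)}"
    unfolding vec.subspace_def
  proof (intro conjI ballI allI)
    show "0 \<in> {x. \<exists>c. x = (\<Sum>i\<in>I. c i *s V i)}"
      by (rule CollectI, rule exI[of _ "\<lambda>_. 0"]) simp
  next
    fix x y assume "x \<in> {x. \<exists>c. x = (\<Sum>i\<in>I. c i *s V i)}" "y \<in> {x. \<exists>c. x = (\<Sum>i\<in>I. c i *s V i)}"
    then obtain c d where "x = (\<Sum>i\<in>I. c i *s V i)" "y = (\<Sum>i\<in>I. d i *s V i)" by auto
    then have "x + y = (\<Sum>i\<in>I. (c i + d i) *s V i)"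
      by (simp add: sum.distrib vector_sadd_rdistrib)
    then show "x + y \<in> {x. \<exists>c. x = (\<Sum>i\<in>I. c i *s V i)}" by (intro CollectI exI[of _ "\<lambda>i. c i + d i"])
  next
    fix a x assume "x \<in> {x. \<exists>c. x = (\<Sum>i\<in>I. c i *s V i)}"
    then obtain c where "x = (\<Sum>i\<in>I. c i *s V i)" by auto
    then have "a *s x = (\<Sum>i\<in>I. (a * c i) *s V i)"
      by (simp add: vec.scale_sum_right)
    then show "a *s x \<in> {x. \<exists>c. x = (\<Sum>i\<in>I. c i *s V i)}" by (intro CollectI exI[of _ "\<lambda>i. a * c i"])
  qed
qed


lemma decode_not_span:
  fixes V :: "nat \<Rightarrow> 'f::field ^ 'L"
  assumes ic: "ic_problem n T D S" and vc: "valid_code n T D S V"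
    and j: "j \<in> {1..T}" and k: "k \<in> D j"
  shows "V k \<notin> vec.span (V ` interf n D S k j)"
proof
  let ?I = "interf n D S k j"
  have I: "?I = {1..n} - ({k} \<union> S j)" using k by (simp add: interf_def)
  have Dsub: "D j \<subseteq> {1..n}" "S j \<subseteq> {1..n} - D j" using ic j by (auto simp: ic_problem_def)
  have kn: "k \<in> {1..n}" using Dsub k by auto
  assume "V k \<in> vec.span (V ` ?I)"
  with span_idx[of ?I V] I obtain c where c: "V k = (\<Sum>i\<in>?I. c i *s V i)" by auto
  define d where "d i = (if i \<in> ?I then c i else 0)" for i
  have "(\<Sum>i\<in>?I. c i *s V i) = (\<Sum>i\<in>{1..n}. d i *s V i)"
    by (rule sum.mono_neutral_cong_left) (auto simp: d_def I)
  with c have c2: "V k = (\<Sum>i\<in>{1..n}. d i *s V i)" by simp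
  define w where "w i = (if i = k then 1 else 0) - d i" for i
  have dk: "d k = 0" by (simp add: d_def I)
  have "codeword n V w = (\<Sum>i\<in>{1..n}. (if i = k then V i else 0)) - (\<Sum>i\<in>{1..n}. d i *s V i)"
  proof -
    have "codeword n V w = (\<Sum>i\<in>{1..n}. (if i = k then 1 else 0) *s V i - d i *s V i)"
      unfolding codeword_def w_def by (simp only: vector_sub_rdistrib)
    also have "\<dots> = (\<Sum>i\<in>{1..n}. (if i = k then 1 else 0) *s V i) - (\<Sum>i\<in>{1..n}. d i *s V i)"
      by (rule sum_subtractf)
    also have "(\<Sum>i\<in>{1..n}. (if i = k then 1 else 0) *s V i) = (\<Sum>i\<in>{1..n}. (if i = k then V i else 0))"
      by (rule sum.cong) auto
    finally show ?thesis .
  qed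
  also have "\<dots> = 0" using c2 kn by (simp add: sum.delta)
  finally have cw: "codeword n V w = codeword n V (\<lambda>_. 0)" by (simp add: codeword_def)
  have rs: "restrict w (S j) = restrict (\<lambda>_. 0) (S j)"
  proof
    fix i show "restrict w (S j) i = restrict (\<lambda>_. (0::'f)) (S j) i"
      using Dsub k by (auto simp: w_def d_def I restrict_def)
  qed
  have "\<exists>g :: 'f ^ 'L \<Rightarrow> (nat \<Rightarrow> 'f) \<Rightarrow> 'f. \<forall>w. g (codeword n V w) (restrict w (S j)) = w k"
    using vc j k unfolding valid_code_def by blast
  then obtain g :: "'f ^ 'L \<Rightarrow> (nat \<Rightarrow> 'f) \<Rightarrow> 'f" where
    g: "\<And>w. g (codeword n V w) (restrict w (S j)) = w k" by blast
  have "w k = 0" using g[of w] g[of "\<lambda>_. 0"] cw rs by simp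
  moreover have "w k = 1" by (simp add: w_def dk)
  ultimately show False by simp
qed

lemma nonzero_msg:
  fixes V :: "nat \<Rightarrow> 'f::field ^ 'L"
  assumes ic: "ic_problem n T D S" and vc: "valid_code n T D S V" and a: "a \<in> {1..n}"
  shows "V a \<noteq> 0"
proof -
  have "\<exists>j\<in>{1..T}. a \<in> D j" using ic a unfolding ic_problem_def by blast
  then obtain j where "j \<in> {1..T}" "a \<in> D j" by blast
  from decode_not_span[OF ic vc this] vec.span_zero[of "V ` interf n D S a j"] show ?thesis by metis
qed

lemma dim_two:
  fixes x y :: "'f::field ^ 'L"
  assumes "x \<noteq> 0" "y \<notin> vec.span {x}"
  shows "vec.dim {x, y} = 2"
proof -
  have "vec.independent {x}" using assms(1) by (simp add: vec.independent_insert)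
  then have "vec.independent {y, x}" using vec.independent_insertI[OF assms(2)] by blast
  moreover have "x \<noteq> y" using assms(2) vec.span_base by auto
  ultimately have "vec.independent {x, y}" "x \<noteq> y" by (simp_all add: insert_commute)
  then have "vec.dim {x, y} = card {x, y}" by (simp add: vec.dim_eq_card_independent)
  with \<open>x \<noteq> y\<close> show ?thesis by simp
qed

lemma conflict_dim_aux:
  fixes V :: "nat \<Rightarrow> 'f::field ^ 'L"
  assumes ic: "ic_problem n T D S" and vc: "valid_code n T D S V"
    and a: "a \<in> {1..n}" and j: "j \<in> {1..T}" and h: "b \<in> D j" "a \<in> interf n D S b j"
  shows "vec.dim {V a, V b} = 2"
proof -
  have ns: "V b \<notin> vec.span (V ` interf n D S b j)" by (rule decode_not_span[OF ic vc j h(1)])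
  have "{V a} \<subseteq> V ` interf n D S b j" using h(2) by simp
  then have "vec.span {V a} \<subseteq> vec.span (V ` interf n D S b j)" by (rule vec.span_mono)
  with ns have "V b \<notin> vec.span {V a}" by blast
  moreover have "V a \<noteq> 0" by (rule nonzero_msg[OF ic vc a])
  ultimately show ?thesis by (rule dim_two[rotated])
qed

lemma conflict_dim:
  fixes V :: "nat \<Rightarrow> 'f::field ^ 'L"
  assumes ic: "ic_problem n T D S" and vc: "valid_code n T D S V"
    and cf: "in_conflict n T D S a b"
  shows "vec.dim {V a, V b} = 2"
proof -
  from cf have ab: "a \<in> {1..n}" "b \<in> {1..n}" unfolding in_conflict_def by blast+
  from cf have "\<exists>j\<in>{1..T}. (b \<in> D j \<and> a \<in> interf n D S b j) \<or> (a \<in> D j \<and> b \<in> interf n D S a j)"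
    unfolding in_conflict_def by blast
  then obtain j where j: "j \<in> {1..T}" and
    h: "(b \<in> D j \<and> a \<in> interf n D S b j) \<or> (a \<in> D j \<and> b \<in> interf n D S a j)"
    by blast
  from h show ?thesis
  proof
    assume "b \<in> D j \<and> a \<in> interf n D S b j"
    then show ?thesis using conflict_dim_aux[OF ic vc ab(1) j] by blast
  next
    assume "a \<in> D j \<and> b \<in> interf n D S a j"
    then have "vec.dim {V b, V a} = 2" using conflict_dim_aux[OF ic vc ab(2) j] by blast
    then show ?thesis by (simp add: insert_commute)
  qed
qed

lemma tri_dim:
  fixes V :: "nat \<Rightarrow> 'f::{finite,field} ^ 3"
  assumes ic: "ic_problem n T D S" and vc: "valid_code n T D S V"
    and tr: "triangular n T D S A"
  shows "vec.dim (V ` A) = 2"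
proof -
  have "\<exists>j\<in>{1..T}. \<exists>k\<in>D j - A. A \<subseteq> interf n D S k j" using tr unfolding triangular_def by blast
  then obtain j k where j: "j \<in> {1..T}" and k: "k \<in> D j - A" and sub: "A \<subseteq> interf n D S k j"
    by blast
  have ns: "V k \<notin> vec.span (V ` interf n D S k j)" using k by (intro decode_not_span[OF ic vc j]) simp
  have "V ` A \<subseteq> V ` interf n D S k j" using sub by (rule image_mono)
  then have "vec.span (V ` A) \<subseteq> vec.span (V ` interf n D S k j)" by (rule vec.span_mono)
  with ns have "V k \<notin> vec.span (V ` A)" by blast
  then have "vec.span (V ` A) \<noteq> UNIV" by blast
  then have "vec.dim (V ` A) \<noteq> vec.dimension TYPE('f) TYPE(3)"
    using vec.dim_eq_full by blast
  then have ne3: "vec.dim (V ` A) \<noteq> CARD(3)"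
    using vec_dim_card vec.dim_UNIV vec.dimension_def by metis
  have le3: "vec.dim (V ` A) \<le> CARD(3)" by (rule dim_subset_UNIV_cart_gen)
  have "\<exists>a\<in>A. \<exists>b\<in>A. in_conflict n T D S a b" using tr unfolding triangular_def by blast
  then obtain a b where ab: "a \<in> A" "b \<in> A" "in_conflict n T D S a b" by blast
  have "{V a, V b} \<subseteq> V ` A" using ab by simp
  then have "vec.dim {V a, V b} \<le> vec.dim (V ` A)" by (rule vec.dim_subset)
  then have "2 \<le> vec.dim (V ` A)" using conflict_dim[OF ic vc ab(3)] by simp
  with ne3 le3 show ?thesis by simp
qed

lemma adj_span:
  fixes V :: "nat \<Rightarrow> 'f::{finite,field} ^ 3"
  assumes ic: "ic_problem n T D S" and vc: "valid_code n T D S V"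
    and ad: "tri_adjacent n T D S A B"
  shows "vec.span (V ` A) = vec.span (V ` B)"
proof -
  have tA: "triangular n T D S A" and tB: "triangular n T D S B"
    and ex: "\<exists>a b. A \<inter> B = {a, b} \<and> in_conflict n T D S a b"
    using ad unfolding tri_adjacent_def by blast+
  from ex obtain a b where ab: "A \<inter> B = {a, b}" "in_conflict n T D S a b" by blast
  have d2: "vec.dim {V a, V b} = 2" using conflict_dim[OF ic vc ab(2)] .
  have sA: "{V a, V b} \<subseteq> V ` A" and sB: "{V a, V b} \<subseteq> V ` B" using ab(1) by blast+
  have "vec.span {V a, V b} = vec.span (V ` A)"
    using sA by (rule vec.dim_eq_span) (simp add: tri_dim[OF ic vc tA] d2)
  moreover have "vec.span {V a, V b} = vec.span (V ` B)"
    using sB by (rule vec.dim_eq_span) (simp add: tri_dim[OF ic vc tB] d2)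
  ultimately show ?thesis by simp
qed

theorem theorem4:
  fixes n T :: nat and D S :: "nat \<Rightarrow> nat set" and V :: "nat \<Rightarrow> 'f::{finite,field} ^ 3"
    and C :: "nat set set"
  assumes "ic_problem n T D S"
    and "valid_code n T D S V"
    and "type2_alignment_set n T D S C"
  shows "vec.dim (V ` (\<Union>C)) = 2"
proof -
  note ic = assms(1) and vc = assms(2)
  have "\<exists>A. triangular n T D S A \<and> C = {B. tri_connected n T D S A B}"
    using assms(3) unfolding type2_alignment_set_def by blast
  then obtain A where tA: "triangular n T D S A"
    and C: "C = {B. tri_connected n T D S A B}" by blast
  have sp: "vec.span (V ` B) = vec.span (V ` A)" if "(tri_adjacent n T D S)\<^sup>*\<^sup>* A B" for B
    using that
  proof (induction rule: rtranclp_induct)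
    case base then show ?case by simp
  next
    case (step y z)
    have "vec.span (V ` y) = vec.span (V ` z)" by (rule adj_span[OF ic vc step(2)])
    with step(3) show ?case by simp
  qed
  have AC: "A \<in> C" using tA by (simp add: C tri_connected_def)
  have s1: "V ` A \<subseteq> vec.span (V ` (\<Union>C))"
  proof
    fix x assume "x \<in> V ` A"
    then have "x \<in> V ` (\<Union>C)" using AC by blast
    then show "x \<in> vec.span (V ` (\<Union>C))" by (rule vec.span_base)
  qed
  have s2: "V ` (\<Union>C) \<subseteq> vec.span (V ` A)"
  proof
    fix x assume "x \<in> V ` (\<Union>C)"
    then obtain i where "i \<in> \<Union>C" "x = V i" by (rule imageE)
    then obtain B where B: "B \<in> C" "i \<in> B" "x = V i" by (meson UnionE)
    then have "x \<in> vec.span (V ` B)" by (intro vec.span_base) simp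
    moreover have "(tri_adjacent n T D S)\<^sup>*\<^sup>* A B" using B(1) by (simp add: C tri_connected_def)
    ultimately show "x \<in> vec.span (V ` A)" using sp by blast
  qed
  have "vec.span (V ` (\<Union>C)) = vec.span (V ` A)"
    by (rule vec.span_eq[THEN iffD2, OF conjI[OF s2 s1]])
  then have "vec.dim (V ` (\<Union>C)) = vec.dim (V ` A)" by (rule vec.span_eq_dim)
  with tri_dim[OF ic vc tA] show ?thesis by simp
qed

end
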